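(* In the iAPG setting described in the context, assume $\mu>0$ and let $\kappa=\frac{L_g}{\gamma_{\mathrm{dec}}\mu}$. For any $c\in[0,1)$ define $\psi_k=F(x^{(k)})-F^*+(1-(1-c)\alpha_k)\frac{\gamma_k}{2}\|x^*-z^{(k)}\|^2$ for $k\ge0$. Then for all $k\ge0$, $$\psi_{k+1}\le\prod_{j=0}^k(1-c\alpha_j)\Big(\psi_0+\frac{\sqrt\kappa}{2(1-c)^2\underline L}\sum_{t=0}^k\frac{\varepsilon_t^2}{\prod_{j=0}^{t-1}(1-c\alpha_j)}\Big),$$ with the convention that an empty product equals $1$. Moreover, if in addition $\varepsilon_k=0$ for all $k$, then for all $k\ge0$, $$F(x^{(k+1)})-F^*+\frac{\gamma_{k+1}}2\|x^*-z^{(k+1)}\|^2\le\Big(1-\sqrt{1/\kappa}\Big)^{k+1}\Big(F(x^{(0)})-F^*+\frac{\gamma_0}{2}\|x^*-z^{(0)}\|^2\Big).$$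
   Context: iAPG setting. Let $g,h:\mathbb R^n\to\mathbb R$ and $r:\mathbb R^n\to\mathbb R\cup\{+\infty\}$, where $g$ is convex, $\mu$-strongly convex for some $\mu\ge0$, and differentiable with $L_g$-Lipschitz gradient ($L_g>0$); $h$ is convex and differentiable with $L_h$-Lipschitz gradient; $r$ is proper, closed and convex. Put $H=h+r$, $F=g+H$, and assume $F$ attains its minimum value $F^*$ at some point $x^*$. Fix constants $\gamma_{\mathrm{dec}}\in(0,1)$ and $\underline L>0$ with $\mu\le\underline L\le L_g$. We consider points $x^{(k)},z^{(k)},y^{(k)}\in\mathbb R^n$ and scalars $\eta_k>0,\alpha_k>0,\gamma_k>0,\varepsilon_k\ge0$ ($k\ge0$) such that $x^{(0)}=z^{(0)}\in\mathrm{dom}(H)$, $\gamma_0\ge\mu$, and for every $k\ge0$: (i) $\gamma_{\mathrm{dec}}/L_g<\eta_k\le1/\underline L$; (ii) $\gamma_{k+1}=\alpha_k^2/\eta_k=(1-\alpha_k)\gamma_k+\alpha_k\mu$; (iii) $y^{(k)}=\frac{1}{\alpha_k\gamma_k+\gamma_{k+1}}\big(\alpha_k\gamma_k z^{(k)}+\gamma_{k+1}x^{(k)}\big)$; (iv) $\mathrm{dist}\big(0,\ \nabla g(y^{(k)})+\tfrac1{\eta_k}(x^{(k+1)}-y^{(k)})+\partial H(x^{(k+1)})\big)\le\varepsilon_k$; (v) $g(x^{(k+1)})\le g(y^{(k)})+\langle\nabla g(y^{(k)}),x^{(k+1)}-y^{(k)}\rangle+\frac1{2\eta_k}\|x^{(k+1)}-y^{(k)}\|^2$;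 (vi) $z^{(k+1)}=x^{(k)}+\frac1{\alpha_k}(x^{(k+1)}-x^{(k)})$. Here $\partial$ denotes the convex subdifferential and $\mathrm{dist}(0,S)=\inf_{s\in S}\|s\|$. *)

theory Defs
  imports "HOL-Analysis.Analysis"
begin

definition proper_fun :: "('a \<Rightarrow> ereal) \<Rightarrow> bool" where
  "proper_fun f \<longleftrightarrow> (\<forall>x. f x \<noteq> -\<infinity>) \<and> (\<exists>x. f x \<noteq> \<infinity>)"

definition epigraph_e :: "('a \<Rightarrow> ereal) \<Rightarrow> ('a \<times> real) set" where
  "epigraph_e f = {(x, t). f x \<le> ereal t}"

definition convex_fun_e :: "('a::real_vector \<Rightarrow> ereal) \<Rightarrow> bool" where
  "convex_fun_e f \<longleftrightarrow> convex (epigraph_e f)"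

definition closed_fun_e :: "('a::topological_space \<Rightarrow> ereal) \<Rightarrow> bool" where
  "closed_fun_e f \<longleftrightarrow> closed (epigraph_e f)"

definition edom :: "('a \<Rightarrow> ereal) \<Rightarrow> 'a set" where
  "edom f = {x. f x < \<infinity>}"

definition subdiff :: "('a::real_inner \<Rightarrow> ereal) \<Rightarrow> 'a \<Rightarrow> 'a set" where
  "subdiff f x = {v. f x < \<infinity> \<and> (\<forall>y. f x + ereal (inner v (y - x)) \<le> f y)}"

definition strongly_convex :: "real \<Rightarrow> ('a::real_inner \<Rightarrow> real) \<Rightarrow> bool" where
  "strongly_convex \<mu> f \<longleftrightarrow> convex_on UNIV (\<lambda>x. f x - \<mu> / 2 * (norm x)\<^sup>2)"

end

theory Submission
  imports Defs
begin

lemma strong_lower: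
  fixes g :: "'a::euclidean_space \<Rightarrow> real"
  assumes sc: "strongly_convex \<mu> g" and gd: "\<And>u. GDERIV g u :> grad_g u"
  shows "g u \<ge> g y + inner (grad_g y) (u - y) + \<mu>/2 * (norm (u - y))\<^sup>2"
proof -
  define d where "d = u - y"
  define f where "f = (\<lambda>t::real. g (y + t *\<^sub>R d) - \<mu>/2 * (norm (y + t *\<^sub>R d))\<^sup>2)"
  have cphi: "convex_on UNIV (\<lambda>x. g x - \<mu> / 2 * (norm x)\<^sup>2)"
    using sc unfolding strongly_convex_def .
  have cf: "convex_on UNIV f"
  proof (rule convex_onI)
    fix t a b :: real assume t: "t > 0" "t < 1"
    have "f ((1 - t) *\<^sub>R a + t *\<^sub>R b) = (\<lambda>x. g x - \<mu> / 2 * (norm x)\<^sup>2) ((1 - t) *\<^sub>R (y + a *\<^sub>R d) + t *\<^sub>R (y + b *\<^sub>R d))"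
      unfolding f_def by (simp add: algebra_simps)
    also have "\<dots> \<le> (1 - t) * f a + t * f b"
      using convex_onD[OF cphi, of t "y + a *\<^sub>R d" "y + b *\<^sub>R d"] t unfolding f_def by simp
    finally show "f ((1 - t) *\<^sub>R a + t *\<^sub>R b) \<le> (1 - t) * f a + t * f b" .
  qed simp
  have d1: "((\<lambda>t. g (y + t *\<^sub>R d)) has_derivative (\<lambda>t. t * inner d (grad_g y))) (at 0)"
  proof -
    have "((\<lambda>t. y + t *\<^sub>R d) has_derivative (\<lambda>t. t *\<^sub>R d)) (at 0)"
      by (auto intro!: derivative_eq_intros)
    moreover have "(g has_derivative (\<lambda>h. inner h (grad_g y))) (at (y + 0 *\<^sub>R d))"
      using gd[of y] by (simp add: gderiv_def)
    ultimately have "((g \<circ> (\<lambda>t. y + t *\<^sub>R d)) has_derivative ((\<lambda>h. inner h (grad_g y)) \<circ> (\<lambda>t. t *\<^sub>R d))) (at 0)"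
      by (rule diff_chain_at)
    then show ?thesis by (simp add: o_def)
  qed
  have d2: "((\<lambda>t. (norm (y + t *\<^sub>R d))\<^sup>2) has_derivative (\<lambda>t. t * (2 * inner y d))) (at 0)"
  proof -
    have "((\<lambda>t. inner (y + t *\<^sub>R d) (y + t *\<^sub>R d)) has_derivative (\<lambda>t. inner (y + 0 *\<^sub>R d) (t *\<^sub>R d) + inner (t *\<^sub>R d) (y + 0 *\<^sub>R d))) (at 0)"
      by (auto intro!: derivative_eq_intros)
    then show ?thesis by (simp add: power2_norm_eq_inner inner_commute algebra_simps)
  qed
  have fd: "(f has_derivative (\<lambda>t. t * (inner d (grad_g y) - \<mu>/2 * (2 * inner y d)))) (at 0)"
    unfolding f_def
    using has_derivative_diff[OF d1 has_derivative_mult_right[OF d2, of "\<mu>/2"]]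
    by (simp add: algebra_simps)
  have "(f has_field_derivative (inner d (grad_g y) - \<mu>/2 * (2 * inner y d))) (at 0)"
  proof -
    have "(\<lambda>t. t * (inner d (grad_g y) - \<mu>/2 * (2 * inner y d))) = (*) (inner d (grad_g y) - \<mu>/2 * (2 * inner y d))"
      by (rule ext) (simp only: mult.commute)
    then show ?thesis unfolding has_field_derivative_def using fd by simp
  qed
  then have "f 1 - f 0 \<ge> (inner d (grad_g y) - \<mu>/2 * (2 * inner y d)) * (1 - 0)"
    by (intro convex_on_imp_above_tangent[OF cf]) auto
  then show ?thesis unfolding f_def d_def
    by (simp add: power2_norm_eq_inner inner_simps inner_commute algebra_simps)
qed
lemma quad_conv:
  fixes a b :: "'a::real_inner"
  assumes "p \<ge> 0" "q \<ge> 0"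
  shows "(norm (p *\<^sub>R a + q *\<^sub>R b))\<^sup>2 \<le> (p + q) * (p * (norm a)\<^sup>2 + q * (norm b)\<^sup>2)"
proof -
  have "(p + q) * (p * (norm a)\<^sup>2 + q * (norm b)\<^sup>2) - (norm (p *\<^sub>R a + q *\<^sub>R b))\<^sup>2 = p * q * (norm (a - b))\<^sup>2"
    by (simp add: power2_norm_eq_inner inner_simps inner_commute algebra_simps)
  moreover have "p * q * (norm (a - b))\<^sup>2 \<ge> 0" using assms by simp
  ultimately show ?thesis by linarith
qed

lemma scal1:
  fixes \<alpha> \<gamma> \<gamma>p \<mu> \<eta> D X Y Z S G zp xp :: real
  assumes "D = \<alpha>*\<gamma>+\<gamma>p" "\<gamma>p*\<eta> = \<alpha>\<^sup>2" "\<gamma>p = (1-\<alpha>)*\<gamma>+\<alpha>*\<mu>" "D*Y = \<alpha>*\<gamma>*Z + \<gamma>p*X"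
     "\<alpha>*zp = \<alpha>*X + (xp - X)" "xp = Y - \<eta>*G"
  shows "\<alpha>*(\<gamma>p*(S - zp)) = \<alpha>*((1-\<alpha>)*\<gamma>*(S-Z) + \<alpha>*\<mu>*(S-Y) + \<alpha>*G)"
  using assms by algebra
lemma scal2:
  fixes \<alpha> \<gamma> \<gamma>p \<mu> \<eta> D X Y Z S G zp xp :: real
  assumes "D = \<alpha>*\<gamma>+\<gamma>p" "\<gamma>p = (1-\<alpha>)*\<gamma>+\<alpha>*\<mu>" "D*Y = \<alpha>*\<gamma>*Z + \<gamma>p*X"
  shows "\<alpha>*((1-\<alpha>)*\<gamma>*(S-Z) + \<alpha>*\<mu>*(S-Y)) = \<gamma>p * ((1-\<alpha>)*X + \<alpha>*S - Y)"
  using assms by algebra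

lemma vec_ids:
  fixes x z y xp zp xs G :: "'a::euclidean_space"
  assumes a: "0<\<alpha>" "0<\<gamma>" "0\<le>\<mu>" "0<\<eta>"
    and gp1: "\<gamma>p = \<alpha>\<^sup>2/\<eta>" and gp2: "\<gamma>p = (1-\<alpha>)*\<gamma> + \<alpha>*\<mu>"
    and yd: "y = (1/(\<alpha>*\<gamma>+\<gamma>p)) *\<^sub>R ((\<alpha>*\<gamma>) *\<^sub>R z + \<gamma>p *\<^sub>R x)"
    and zd: "zp = x + (1/\<alpha>) *\<^sub>R (xp - x)"
    and Gd: "xp = y - \<eta> *\<^sub>R G"
  shows "\<gamma>p *\<^sub>R (xs - zp) = (((1-\<alpha>)*\<gamma>) *\<^sub>R (xs - z) + (\<alpha>*\<mu>) *\<^sub>R (xs - y)) + \<alpha> *\<^sub>R G"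
    and "(\<alpha>/\<gamma>p) *\<^sub>R (((1-\<alpha>)*\<gamma>) *\<^sub>R (xs - z) + (\<alpha>*\<mu>) *\<^sub>R (xs - y)) = (1-\<alpha>) *\<^sub>R x + \<alpha> *\<^sub>R xs - y"
    and "(1-\<alpha>) *\<^sub>R (x - xp) + \<alpha> *\<^sub>R (xs - xp) = \<alpha> *\<^sub>R (xs - zp)"
proof -
  have gpos: "\<gamma>p > 0" using gp1 a by simp
  have D: "\<alpha>*\<gamma>+\<gamma>p = \<gamma> + \<alpha>*\<mu>" using gp2 by (simp add: algebra_simps)
  have Dpos: "\<alpha>*\<gamma>+\<gamma>p > 0" using a gpos by (simp add: add_pos_pos)
  have eta: "\<eta> = \<alpha>\<^sup>2/\<gamma>p" using gp1 a gpos by (simp add: field_simps)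
  have Y: "(\<alpha>*\<gamma>+\<gamma>p) * (y \<bullet> b) = \<alpha>*\<gamma> * (z \<bullet> b) + \<gamma>p * (x \<bullet> b)" for b
    using yd Dpos by (simp add: inner_simps divide_simps)
  have Z: "\<alpha> * (zp \<bullet> b) = \<alpha> * (x \<bullet> b) + (xp \<bullet> b - x \<bullet> b)" for b
    unfolding zd using a by (simp add: inner_simps field_simps)
  have X: "xp \<bullet> b = y \<bullet> b - \<eta> * (G \<bullet> b)" for b
    using Gd by (simp add: inner_simps)
  have ge: "\<gamma>p * \<eta> = \<alpha>\<^sup>2" using gp1 a by simp
  show "\<gamma>p *\<^sub>R (xs - zp) = (((1-\<alpha>)*\<gamma>) *\<^sub>R (xs - z) + (\<alpha>*\<mu>) *\<^sub>R (xs - y)) + \<alpha> *\<^sub>R G"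
  proof (rule euclidean_eqI)
    fix b :: 'a assume "b \<in> Basis"
    have "\<alpha>*(\<gamma>p*(xs \<bullet> b - zp \<bullet> b)) = \<alpha>*((1-\<alpha>)*\<gamma>*(xs \<bullet> b-z \<bullet> b) + \<alpha>*\<mu>*(xs \<bullet> b-y \<bullet> b) + \<alpha>*(G \<bullet> b))"
      by (rule scal1[OF refl ge gp2 Y Z X])
    then show "(\<gamma>p *\<^sub>R (xs - zp)) \<bullet> b = ((((1-\<alpha>)*\<gamma>) *\<^sub>R (xs - z) + (\<alpha>*\<mu>) *\<^sub>R (xs - y)) + \<alpha> *\<^sub>R G) \<bullet> b"
      using a by (simp add: inner_simps)
  qed
  show "(\<alpha>/\<gamma>p) *\<^sub>R (((1-\<alpha>)*\<gamma>) *\<^sub>R (xs - z) + (\<alpha>*\<mu>) *\<^sub>R (xs - y)) = (1-\<alpha>) *\<^sub>R x + \<alpha> *\<^sub>R xs - y"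
  proof (rule euclidean_eqI)
    fix b :: 'a assume "b \<in> Basis"
    have "\<alpha>*((1-\<alpha>)*\<gamma>*(xs \<bullet> b-z \<bullet> b) + \<alpha>*\<mu>*(xs \<bullet> b-y \<bullet> b)) = \<gamma>p * ((1-\<alpha>)*(x \<bullet> b) + \<alpha>*(xs \<bullet> b) - y \<bullet> b)"
      by (rule scal2[OF refl gp2 Y])
    then have "(\<alpha>/\<gamma>p)*((1-\<alpha>)*\<gamma>*(xs \<bullet> b-z \<bullet> b) + \<alpha>*\<mu>*(xs \<bullet> b-y \<bullet> b)) = (1-\<alpha>)*(x \<bullet> b) + \<alpha>*(xs \<bullet> b) - y \<bullet> b"
      using gpos by (metis (no_types, lifting) nonzero_mult_div_cancel_left times_divide_eq_left less_irrefl)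
    then show "((\<alpha>/\<gamma>p) *\<^sub>R (((1-\<alpha>)*\<gamma>) *\<^sub>R (xs - z) + (\<alpha>*\<mu>) *\<^sub>R (xs - y))) \<bullet> b = ((1-\<alpha>) *\<^sub>R x + \<alpha> *\<^sub>R xs - y) \<bullet> b"
      by (simp add: inner_simps algebra_simps)
  qed
  show "(1-\<alpha>) *\<^sub>R (x - xp) + \<alpha> *\<^sub>R (xs - xp) = \<alpha> *\<^sub>R (xs - zp)"
    unfolding zd using a by (simp add: algebra_simps)
qed
lemma star_ineq:
  fixes u y xp G gy v w :: "'a::real_inner"
  assumes "0 < \<eta>" and xpG: "xp = y - \<eta> *\<^sub>R G" and wd: "w = v + G - gy"
    and lu: "gu \<ge> gyv + inner gy (u - y) + \<mu>/2*(norm(u-y))\<^sup>2"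
    and up: "gxp \<le> gyv + inner gy (xp-y) + 1/(2*\<eta>)*(norm(xp-y))\<^sup>2"
    and hu: "Hp + inner w (u - xp) \<le> Hu"
  shows "gu + Hu \<ge> gxp + Hp + inner G (u - y) + \<eta>/2 * inner G G + \<mu>/2*(norm(u-y))\<^sup>2 + inner v (u - xp)"
proof -
  have n: "(norm(xp-y))\<^sup>2 = \<eta>\<^sup>2 * inner G G"
  proof -
    have "xp - y = (-\<eta>) *\<^sub>R G" unfolding xpG by simp
    then show ?thesis by (simp add: power_mult_distrib dot_square_norm)
  qed
  have up2: "gxp \<le> gyv - \<eta> * inner gy G + \<eta>/2 * inner G G"
    using up unfolding n using \<open>0 < \<eta>\<close> by (simp add: xpG inner_simps power2_eq_square)
  have "inner w (u - xp) = inner v (u - xp) + inner G (u - y) + \<eta> * inner G G - inner gy (u - y) - \<eta> * inner gy G"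
    unfolding wd xpG by (simp add: inner_simps algebra_simps)
  then show ?thesis using lu up2 hu by linarith
qed

lemma core:
  fixes x z y xp zp xs v gy w :: "'a::euclidean_space"
  assumes a: "0<\<alpha>" "\<alpha>\<le>1" "0<\<gamma>" "0\<le>\<mu>" "0<\<eta>"
    and gp1: "\<gamma>p = \<alpha>\<^sup>2/\<eta>" and gp2: "\<gamma>p = (1-\<alpha>)*\<gamma> + \<alpha>*\<mu>"
    and yd: "y = (1/(\<alpha>*\<gamma>+\<gamma>p)) *\<^sub>R ((\<alpha>*\<gamma>) *\<^sub>R z + \<gamma>p *\<^sub>R x)"
    and zd: "zp = x + (1/\<alpha>) *\<^sub>R (xp - x)"
    and lx: "gx \<ge> gyv + inner gy (x - y) + \<mu>/2*(norm(x-y))\<^sup>2"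
    and ls: "gs \<ge> gyv + inner gy (xs - y) + \<mu>/2*(norm(xs-y))\<^sup>2"
    and up: "gxp \<le> gyv + inner gy (xp-y) + 1/(2*\<eta>)*(norm(xp-y))\<^sup>2"
    and hx: "Hp + inner w (x - xp) \<le> Hx"
    and hs: "Hp + inner w (xs - xp) \<le> Hs"
    and vd: "v = gy + (1/\<eta>) *\<^sub>R (xp - y) + w"
  shows "gxp + Hp - (gs+Hs) + \<gamma>p/2*(norm(xs-zp))\<^sup>2
     \<le> (1-\<alpha>)*(gx+Hx-(gs+Hs) + \<gamma>/2*(norm(xs-z))\<^sup>2) - \<alpha> * inner v (xs - zp)"
proof -
  define G where "G = (1/\<eta>) *\<^sub>R (y - xp)"
  have xpG: "xp = y - \<eta> *\<^sub>R G" unfolding G_def using a by simp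
  have wd: "w = v + G - gy" unfolding vd G_def by (simp add: algebra_simps)
  have gpos: "\<gamma>p > 0" using gp1 a by simp
  have ge: "\<alpha>\<^sup>2/\<gamma>p = \<eta>" using gp1 a gpos by (simp add: field_simps)
  note ids = vec_ids[OF a(1) a(3) a(4) a(5) gp1 gp2 yd zd xpG, of xs]
  define A where "A = ((1-\<alpha>)*\<gamma>) *\<^sub>R (xs - z) + (\<alpha>*\<mu>) *\<^sub>R (xs - y)"
  have sx: "gx + Hx \<ge> gxp + Hp + inner G (x - y) + \<eta>/2 * inner G G + \<mu>/2*(norm(x-y))\<^sup>2 + inner v (x - xp)"
    by (rule star_ineq[OF a(5) xpG wd lx up hx])
  have ss: "gs + Hs \<ge> gxp + Hp + inner G (xs - y) + \<eta>/2 * inner G G + \<mu>/2*(norm(xs-y))\<^sup>2 + inner v (xs - xp)"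
    by (rule star_ineq[OF a(5) xpG wd ls up hs])
  have sx': "(1-\<alpha>)*(gx + Hx) \<ge> (1-\<alpha>)*(gxp + Hp + inner G (x - y) + \<eta>/2 * inner G G + \<mu>/2*(norm(x-y))\<^sup>2 + inner v (x - xp))"
    using sx a by (intro mult_left_mono) auto
  have ss': "\<alpha>*(gs + Hs) \<ge> \<alpha>*(gxp + Hp + inner G (xs - y) + \<eta>/2 * inner G G + \<mu>/2*(norm(xs-y))\<^sup>2 + inner v (xs - xp))"
    using ss a by (intro mult_left_mono) auto
  have nx: "(1-\<alpha>)*(\<mu>/2*(norm(x-y))\<^sup>2) \<ge> 0" using a by simp
  have ev: "(1-\<alpha>)*inner v (x - xp) + \<alpha>*inner v (xs - xp) = \<alpha> * inner v (xs - zp)"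
  proof -
    have "(1-\<alpha>)*inner v (x - xp) + \<alpha>*inner v (xs - xp) = inner v ((1-\<alpha>) *\<^sub>R (x - xp) + \<alpha> *\<^sub>R (xs - xp))"
      by (simp add: inner_simps)
    also have "\<dots> = \<alpha> * inner v (xs - zp)" using ids(3) by (simp add: inner_simps)
    finally show ?thesis .
  qed
  have nA: "(norm A)\<^sup>2 \<le> \<gamma>p * ((1-\<alpha>)*\<gamma>*(norm (xs - z))\<^sup>2 + \<alpha>*\<mu>*(norm(xs-y))\<^sup>2)"
  proof -
    have "(norm A)\<^sup>2 \<le> ((1-\<alpha>)*\<gamma> + \<alpha>*\<mu>) * (((1-\<alpha>)*\<gamma>)*(norm(xs-z))\<^sup>2 + (\<alpha>*\<mu>)*(norm(xs-y))\<^sup>2)"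
      unfolding A_def by (rule quad_conv) (use a in auto)
    then show ?thesis by (simp only: gp2[symmetric])
  qed
  have eq1: "\<gamma>p\<^sup>2 * (norm(xs-zp))\<^sup>2 = (norm A)\<^sup>2 + 2*\<alpha>*inner A G + \<alpha>\<^sup>2 * inner G G"
  proof -
    have "\<gamma>p\<^sup>2 * (norm(xs-zp))\<^sup>2 = (norm (\<gamma>p *\<^sub>R (xs - zp)))\<^sup>2" by (simp add: power_mult_distrib)
    also have "\<dots> = (norm (A + \<alpha> *\<^sub>R G))\<^sup>2" using ids(1) unfolding A_def by simp
    also have "\<dots> = (norm A)\<^sup>2 + 2*\<alpha>*inner A G + \<alpha>\<^sup>2 * inner G G"
      by (simp only: power2_norm_eq_inner inner_simps inner_commute[of G A]) (simp add: power2_eq_square algebra_simps)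
    finally show ?thesis .
  qed
  have iAG: "\<alpha> * inner A G = \<gamma>p * ((1-\<alpha>) * inner G (x - y) + \<alpha> * inner G (xs - y))"
  proof -
    have "\<alpha> * inner A G = \<gamma>p * inner ((\<alpha>/\<gamma>p) *\<^sub>R A) G" using gpos by (simp add: inner_simps)
    also have "\<dots> = \<gamma>p * inner ((1-\<alpha>) *\<^sub>R x + \<alpha> *\<^sub>R xs - y) G" using ids(2) unfolding A_def by simp
    also have "\<dots> = \<gamma>p * ((1-\<alpha>) * inner G (x - y) + \<alpha> * inner G (xs - y))"
      by (simp add: inner_simps inner_commute algebra_simps)
    finally show ?thesis .
  qed
  have quad: "\<gamma>p/2*(norm(xs-zp))\<^sup>2 \<le> (1-\<alpha>)*\<gamma>/2*(norm (xs - z))\<^sup>2 + \<alpha>*\<mu>/2*(norm(xs-y))\<^sup>2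
       + ((1-\<alpha>) * inner G (x - y) + \<alpha> * inner G (xs - y)) + \<eta>/2 * inner G G"
  proof -
    have "\<gamma>p/2*(norm(xs-zp))\<^sup>2 = (\<gamma>p\<^sup>2 * (norm(xs-zp))\<^sup>2) / (2*\<gamma>p)"
      using gpos by (simp add: power2_eq_square field_simps)
    also have "\<dots> = ((norm A)\<^sup>2 + 2*(\<alpha>*inner A G) + \<alpha>\<^sup>2 * inner G G) / (2*\<gamma>p)" unfolding eq1 by simp
    also have "\<dots> = (norm A)\<^sup>2/(2*\<gamma>p) + ((1-\<alpha>) * inner G (x - y) + \<alpha> * inner G (xs - y)) + (\<alpha>\<^sup>2/\<gamma>p)/2 * inner G G"
      unfolding iAG using gpos by (simp add: field_simps)
    also have "\<dots> \<le> (\<gamma>p * ((1-\<alpha>)*\<gamma>*(norm (xs - z))\<^sup>2 + \<alpha>*\<mu>*(norm(xs-y))\<^sup>2))/(2*\<gamma>p) + ((1-\<alpha>) * inner G (x - y) + \<alpha> * inner G (xs - y)) + (\<alpha>\<^sup>2/\<gamma>p)/2 * inner G G"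
      using nA gpos by (simp add: divide_right_mono pos_divide_le_eq mult.commute)
    also have "\<dots> = (1-\<alpha>)*\<gamma>/2*(norm (xs - z))\<^sup>2 + \<alpha>*\<mu>/2*(norm(xs-y))\<^sup>2
       + ((1-\<alpha>) * inner G (x - y) + \<alpha> * inner G (xs - y)) + \<eta>/2 * inner G G"
      unfolding ge using gpos by (simp add: field_simps)
    finally show ?thesis .
  qed
  show ?thesis using sx' ss' nx ev quad by (simp add: algebra_simps inner_simps) argo
qed


lemma unroll_alg:
  fixes P f a K S e :: real
  assumes "P \<noteq> 0"
  shows "f * (P * (a + K * S) + K * e) = (f * P) * (a + K * (S + e / P))"
  using assms by (simp add: field_simps)

lemma eps_le:
  fixes a b c :: real
  assumes "c \<ge> 0" "\<And>\<delta>. \<delta> > 0 \<Longrightarrow> a \<le> b + \<delta> * c"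
  shows "a \<le> b"
proof (rule ccontr)
  assume "\<not> a \<le> b"
  then have ab: "a - b > 0" by simp
  define \<delta> where "\<delta> = (a - b) / (2 * (c + 1))"
  have dp: "\<delta> > 0" unfolding \<delta>_def using ab assms(1) by simp
  have "\<delta> * c < a - b"
  proof -
    have "\<delta> * c = (a - b) * (c / (2 * (c + 1)))" unfolding \<delta>_def by simp
    also have "c / (2 * (c + 1)) < 1" using assms(1) by simp
    then have "(a - b) * (c / (2 * (c + 1))) < (a - b) * 1" using ab by (intro mult_strict_left_mono) auto
    finally show ?thesis by simp
  qed
  then show False using assms(2)[OF dp] by linarith
qed

theorem theorem3p5:
  fixes g h :: "'a::euclidean_space \<Rightarrow> real"
    and grad_g grad_h :: "'a \<Rightarrow> 'a"
    and r :: "'a \<Rightarrow> ereal"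
    and \<mu> L_g L_h \<gamma>_dec L_low c :: real
    and xs :: 'a
    and x z y :: "nat \<Rightarrow> 'a"
    and \<eta> \<alpha> \<gamma> \<epsilon> :: "nat \<Rightarrow> real"
  defines "H \<equiv> (\<lambda>u. ereal (h u) + r u)"
  defines "F \<equiv> (\<lambda>u. ereal (g u) + H u)"
  defines "\<kappa> \<equiv> L_g / (\<gamma>_dec * \<mu>)"
  assumes g_convex: "convex_on UNIV g"
    and g_strong: "strongly_convex \<mu> g"
    and g_grad: "\<And>u. GDERIV g u :> grad_g u"
    and Lg_pos: "L_g > 0"
    and g_lip: "L_g-lipschitz_on UNIV grad_g"
    and h_convex: "convex_on UNIV h"
    and h_grad: "\<And>u. GDERIV h u :> grad_h u"
    and h_lip: "L_h-lipschitz_on UNIV grad_h"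
    and r_proper: "proper_fun r"
    and r_closed: "closed_fun_e r"
    and r_convex: "convex_fun_e r"
    and xs_min: "\<And>u. F xs \<le> F u"
    and \<gamma>dec: "0 < \<gamma>_dec" "\<gamma>_dec < 1"
    and L_low: "L_low > 0" "\<mu> \<le> L_low" "L_low \<le> L_g"
    and mu_pos: "\<mu> > 0"
    and c: "0 \<le> c" "c < 1"
    and init: "x 0 = z 0" "x 0 \<in> edom H" "\<gamma> 0 \<ge> \<mu>"
    and pos: "\<And>k. \<eta> k > 0" "\<And>k. \<alpha> k > 0" "\<And>k. \<gamma> k > 0" "\<And>k. \<epsilon> k \<ge> 0"
    and step_i: "\<And>k. \<gamma>_dec / L_g < \<eta> k \<and> \<eta> k \<le> 1 / L_low"
    and step_ii: "\<And>k. \<gamma> (Suc k) = (\<alpha> k)\<^sup>2 / \<eta> k \<and>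
                         (\<alpha> k)\<^sup>2 / \<eta> k = (1 - \<alpha> k) * \<gamma> k + \<alpha> k * \<mu>"
    and step_iii: "\<And>k. y k = (1 / (\<alpha> k * \<gamma> k + \<gamma> (Suc k))) *\<^sub>R (
                         (\<alpha> k * \<gamma> k) *\<^sub>R z k + \<gamma> (Suc k) *\<^sub>R x k)"
    and step_iv: "\<And>k. let S = (\<lambda>v. grad_g (y k) + (1 / \<eta> k) *\<^sub>R (x (Suc k) - y k) + v)
                                 ` subdiff H (x (Suc k))
                       in S \<noteq> {} \<and> infdist 0 S \<le> \<epsilon> k"
    and step_v: "\<And>k. g (x (Suc k)) \<le> g (y k) + inner (grad_g (y k)) (x (Suc k) - y k)
                        + 1 / (2 * \<eta> k) * (norm (x (Suc k) - y k))\<^sup>2"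
    and step_vi: "\<And>k. z (Suc k) = x k + (1 / \<alpha> k) *\<^sub>R (x (Suc k) - x k)"
  shows "(let \<psi> = (\<lambda>k. F (x k) - F xs
                   + ereal ((1 - (1 - c) * \<alpha> k) * \<gamma> k / 2 * (norm (xs - z k))\<^sup>2))
          in \<forall>k. \<psi> (Suc k) \<le> ereal (\<Prod>j\<le>k. 1 - c * \<alpha> j) *
                 (\<psi> 0 + ereal (sqrt \<kappa> / (2 * (1 - c)\<^sup>2 * L_low) *
                    (\<Sum>t\<le>k. (\<epsilon> t)\<^sup>2 / (\<Prod>j<t. 1 - c * \<alpha> j)))))
     \<and> ((\<forall>k. \<epsilon> k = 0) \<longrightarrow>
         (\<forall>k. F (x (Suc k)) - F xs + ereal (\<gamma> (Suc k) / 2 * (norm (xs - z (Suc k)))\<^sup>2)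
              \<le> ereal ((1 - sqrt (1 / \<kappa>)) ^ (Suc k)) *
                 (F (x 0) - F xs + ereal (\<gamma> 0 / 2 * (norm (xs - z 0))\<^sup>2))))"
proof -
  define K where "K = sqrt \<kappa> / (2 * (1 - c)\<^sup>2 * L_low)"
  have eta_pos: "\<eta> k > 0" for k using pos(1) .
  have eta_le: "\<eta> k \<le> 1 / L_low" for k using step_i[of k] by simp
  have eta_gt: "\<gamma>_dec / L_g < \<eta> k" for k using step_i[of k] by simp
  have gs1: "\<gamma> (Suc k) = (\<alpha> k)\<^sup>2 / \<eta> k" for k using step_ii[of k] by simp
  have gs2: "\<gamma> (Suc k) = (1 - \<alpha> k) * \<gamma> k + \<alpha> k * \<mu>" for k using step_ii[of k] by simp
  have invL: "L_low \<le> 1 / \<eta> k" for k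
    using eta_le[of k] eta_pos[of k] L_low(1) by (simp add: field_simps)
  have al_le: "\<alpha> k \<le> 1" if "\<gamma> k \<ge> \<mu>" for k
  proof (rule ccontr)
    assume "\<not> \<alpha> k \<le> 1"
    then have a1: "\<alpha> k > 1" by simp
    have "(1 - \<alpha> k) * \<gamma> k \<le> (1 - \<alpha> k) * \<mu>" using a1 that by (intro mult_left_mono_neg) auto
    then have "\<gamma> (Suc k) \<le> \<mu>" using gs2[of k] by (simp add: algebra_simps)
    moreover have "(\<alpha> k)\<^sup>2 / \<eta> k > 1 / \<eta> k"
      using a1 eta_pos[of k] by (simp add: divide_strict_right_mono power_gt1_lemma one_less_power)
    ultimately show False using gs1[of k] invL[of k] L_low by linarith
  qed
  have gam_ge: "\<gamma> k \<ge> \<mu>" for k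
  proof (induction k)
    case 0 show ?case using init(3) .
  next
    case (Suc k)
    have "(1 - \<alpha> k) * \<gamma> k \<ge> (1 - \<alpha> k) * \<mu>" using al_le[OF Suc] Suc by (intro mult_left_mono) auto
    then show ?case using gs2[of k] by (simp add: algebra_simps)
  qed
  have al1: "\<alpha> k \<le> 1" for k using al_le[OF gam_ge] .
  have kap_pos: "\<kappa> > 0" unfolding \<kappa>_def using Lg_pos \<gamma>dec mu_pos by simp
  have kap_ge1: "\<kappa> \<ge> 1"
  proof -
    have "\<gamma>_dec * \<mu> \<le> L_g" using \<gamma>dec mu_pos L_low
      by (metis less_eq_real_def mult_left_le_one_le order_trans)
    then show ?thesis unfolding \<kappa>_def using \<gamma>dec mu_pos by simp
  qed
  have al_sq: "(\<alpha> k)\<^sup>2 > 1 / \<kappa>" for k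
  proof -
    have "(\<alpha> k)\<^sup>2 = \<eta> k * \<gamma> (Suc k)" using gs1[of k] eta_pos[of k] by simp
    also have "\<dots> \<ge> \<eta> k * \<mu>" using gam_ge[of "Suc k"] eta_pos[of k] by simp
    finally have "(\<alpha> k)\<^sup>2 \<ge> \<eta> k * \<mu>" .
    moreover have "\<eta> k * \<mu> > \<gamma>_dec / L_g * \<mu>" using mult_strict_right_mono[OF eta_gt[of k] mu_pos] by simp
    moreover have "\<gamma>_dec / L_g * \<mu> = 1 / \<kappa>" unfolding \<kappa>_def by simp
    ultimately show ?thesis by linarith
  qed
  have al_lb: "sqrt (1 / \<kappa>) < \<alpha> k" for k
  proof -
    have "sqrt (1 / \<kappa>) < sqrt ((\<alpha> k)\<^sup>2)" using al_sq[of k] by (simp only: real_sqrt_less_iff)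
    then show ?thesis using pos(2)[of k] by simp
  qed
  have inv_al: "1 / \<alpha> k \<le> sqrt \<kappa>" for k
  proof -
    have "sqrt (1 / \<kappa>) = 1 / sqrt \<kappa>" by (simp add: real_sqrt_divide)
    then have "1 / sqrt \<kappa> < \<alpha> k" using al_lb[of k] by simp
    then show ?thesis using kap_pos pos(2)[of k] by (simp add: field_simps)
  qed
  have rne: "r u \<noteq> -\<infinity>" for u using r_proper unfolding proper_fun_def by blast
  have Hne: "H u \<noteq> -\<infinity>" for u unfolding H_def using rne[of u] by (cases "r u") auto
  have Hfin_x: "H (x k) \<noteq> \<infinity>" for k
  proof (cases k)
    case 0 then show ?thesis using init(2) unfolding edom_def by auto
  next
    case (Suc j)
    have "subdiff H (x (Suc j)) \<noteq> {}" using step_iv[of j] unfolding Let_def by auto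
    then show ?thesis using Suc unfolding subdiff_def by auto
  qed
  have Fx0: "F (x 0) \<noteq> \<infinity>" unfolding F_def using Hfin_x[of 0] Hne[of "x 0"] by (cases "H (x 0)") auto
  have Hfin_s: "H xs \<noteq> \<infinity>"
  proof
    assume "H xs = \<infinity>"
    then have "F xs = \<infinity>" unfolding F_def by simp
    then show False using xs_min[of "x 0"] Fx0 by simp
  qed
  define Hr where "Hr = (\<lambda>u. real_of_ereal (H u))"
  have Heq: "H u = ereal (Hr u)" if "H u \<noteq> \<infinity>" for u
    unfolding Hr_def using that Hne[of u] by (cases "H u") auto
  have Feq: "F u = ereal (g u + Hr u)" if "H u \<noteq> \<infinity>" for u
    unfolding F_def using Heq[OF that] by simp
  define Fs where "Fs = g xs + Hr xs"
  define Fr where "Fr = (\<lambda>k. g (x k) + Hr (x k) - Fs)"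
  define D where "D = (\<lambda>k. norm (xs - z k))"
  define E where "E = (\<lambda>k. Fr k + \<gamma> k / 2 * (D k)\<^sup>2)"
  have Fr_nn: "Fr k \<ge> 0" for k
    using xs_min[of "x k"] unfolding Feq[OF Hfin_s] Feq[OF Hfin_x] Fr_def Fs_def by simp
  have E_nn: "E k \<ge> 0" for k unfolding E_def using Fr_nn[of k] pos(3)[of k] by simp
  have step: "E (Suc k) \<le> (1 - \<alpha> k) * E k + \<alpha> k * \<epsilon> k * D (Suc k)" for k
  proof -
    define S where "S = (\<lambda>v. grad_g (y k) + (1 / \<eta> k) *\<^sub>R (x (Suc k) - y k) + v) ` subdiff H (x (Suc k))"
    have Sne: "S \<noteq> {}" and Sd: "infdist 0 S \<le> \<epsilon> k" using step_iv[of k] unfolding Let_def S_def by auto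
    show ?thesis
    proof (rule eps_le[where c = "\<alpha> k * D (Suc k)"])
      show "0 \<le> \<alpha> k * D (Suc k)" using pos(2)[of k] unfolding D_def by simp
      fix \<delta> :: real assume dp: "\<delta> > 0"
      have "(INF a\<in>S. dist 0 a) < \<epsilon> k + \<delta>" using Sd dp unfolding infdist_notempty[OF Sne] by simp
      then obtain s where sS: "s \<in> S" and sn: "dist 0 s < \<epsilon> k + \<delta>"
      proof -
        have bdd: "bdd_below ((\<lambda>a. dist 0 a) ` S)" by (rule bdd_belowI[of _ 0]) auto
        show ?thesis using cINF_less_iff[OF Sne bdd] \<open>(INF a\<in>S. dist 0 a) < \<epsilon> k + \<delta>\<close> that by blast
      qed
      from sS obtain w where w: "w \<in> subdiff H (x (Suc k))"
        and sd: "s = grad_g (y k) + (1 / \<eta> k) *\<^sub>R (x (Suc k) - y k) + w" unfolding S_def by auto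
      have sub: "Hr (x (Suc k)) + inner w (u - x (Suc k)) \<le> Hr u" if "H u \<noteq> \<infinity>" for u
      proof -
        have "H (x (Suc k)) + ereal (inner w (u - x (Suc k))) \<le> H u" using w unfolding subdiff_def by auto
        then show ?thesis unfolding Heq[OF that] Heq[OF Hfin_x[of "Suc k"]] by simp
      qed
      have c: "g (x (Suc k)) + Hr (x (Suc k)) - (g xs + Hr xs) + \<gamma> (Suc k)/2*(norm(xs - z (Suc k)))\<^sup>2
         \<le> (1-\<alpha> k)*(g (x k) + Hr (x k) - (g xs + Hr xs) + \<gamma> k/2*(norm(xs - z k))\<^sup>2) - \<alpha> k * inner s (xs - z (Suc k))"
        by (rule core[OF pos(2) al1 pos(3) _ eta_pos gs1 gs2 step_iii step_vi
              strong_lower[OF g_strong g_grad] strong_lower[OF g_strong g_grad] step_v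
              sub[OF Hfin_x[of k]] sub[OF Hfin_s] sd])
           (use mu_pos in simp)
      have "- inner s (xs - z (Suc k)) \<le> norm s * D (Suc k)"
        using norm_cauchy_schwarz[of "-s" "xs - z (Suc k)"] unfolding D_def by simp
      also have "\<dots> \<le> (\<epsilon> k + \<delta>) * D (Suc k)" using sn unfolding D_def
        by (intro mult_right_mono) auto
      finally have "- (\<alpha> k * inner s (xs - z (Suc k))) \<le> \<alpha> k * ((\<epsilon> k + \<delta>) * D (Suc k))"
        using pos(2)[of k] by (metis minus_mult_right mult_left_mono less_imp_le)
      then show "E (Suc k) \<le> (1 - \<alpha> k) * E k + \<alpha> k * \<epsilon> k * D (Suc k) + \<delta> * (\<alpha> k * D (Suc k))"
        using c unfolding E_def Fr_def Fs_def D_def by (simp add: algebra_simps)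
    qed
  qed
  define \<psi>r where "\<psi>r = (\<lambda>k. Fr k + (1 - (1 - c) * \<alpha> k) * \<gamma> k / 2 * (D k)\<^sup>2)"
  have psi_step: "\<psi>r (Suc k) \<le> (1 - c * \<alpha> k) * (\<psi>r k + K * (\<epsilon> k)\<^sup>2)" for k
  proof -
    define a where "a = \<alpha> k"
    define ap where "ap = \<alpha> (Suc k)"
    define gk where "gk = \<gamma> k"
    define gp where "gp = \<gamma> (Suc k)"
    define e where "e = \<epsilon> k"
    define Dp where "Dp = D (Suc k)"
    define Dk where "Dk = D k"
    define et where "et = \<eta> k"
    have a0: "a > 0" "a \<le> 1" unfolding a_def using pos(2) al1 by auto
    have ap0: "ap > 0" unfolding ap_def using pos(2) by auto
    have gp0: "gp > 0" "gk > 0" unfolding gp_def gk_def using pos(3) by auto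
    have et0: "et > 0" unfolding et_def using eta_pos by auto
    have c1: "1 - c > 0" using c by simp
    define A where "A = (1 - c) * ap * gp"
    have A0: "A > 0" unfolding A_def using c1 ap0 gp0 by simp
    have st: "Fr (Suc k) + gp / 2 * Dp\<^sup>2 \<le> (1 - a) * (Fr k + gk / 2 * Dk\<^sup>2) + a * e * Dp"
      using step[of k] unfolding E_def a_def gp_def gk_def Dp_def Dk_def e_def .
    have p1: "(1 - a) * Fr k \<le> (1 - c * a) * Fr k"
      using Fr_nn[of k] c a0 by (intro mult_right_mono) (auto simp: mult_left_le_one_le)
    have p2: "(1 - a) * (gk / 2 * Dk\<^sup>2) \<le> ((1 - c * a) * (1 - (1 - c) * a)) * (gk / 2 * Dk\<^sup>2)"
    proof -
      have "(1 - c * a) * (1 - (1 - c) * a) = (1 - a) + c * (1 - c) * a\<^sup>2"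
        by (simp add: algebra_simps power2_eq_square)
      moreover have "c * (1 - c) * a\<^sup>2 \<ge> 0" using c c1 by simp
      ultimately have "(1 - a) \<le> (1 - c * a) * (1 - (1 - c) * a)" by linarith
      then show ?thesis
        using gp0 by (intro mult_right_mono) auto
    qed
    have q1: "a * e * Dp - A / 2 * Dp\<^sup>2 \<le> (a * e)\<^sup>2 / (2 * A)"
    proof -
      have "0 \<le> (a * e - A * Dp)\<^sup>2" by simp
      then have "0 \<le> ((a * e - A * Dp)\<^sup>2) / (2 * A)" using A0 by simp
      also have "((a * e - A * Dp)\<^sup>2) / (2 * A) = (a * e)\<^sup>2 / (2 * A) - (a * e * Dp - A / 2 * Dp\<^sup>2)"
        using A0 by (simp add: field_simps power2_eq_square)
      finally show ?thesis by simp
    qed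
    have q2: "(a * e)\<^sup>2 / (2 * A) = et / ap * (e\<^sup>2 / (2 * (1 - c)))"
    proof -
      have "a\<^sup>2 = et * gp" unfolding a_def et_def gp_def using gs1[of k] eta_pos[of k] by simp
      then show ?thesis unfolding A_def using gp0 ap0 c1
        by (simp add: power_mult_distrib field_simps)
    qed
    have q3: "et / ap \<le> 1 / L_low * sqrt \<kappa>"
    proof -
      have "et / ap = et * (1 / ap)" by simp
      also have "\<dots> \<le> 1 / L_low * sqrt \<kappa>"
        using eta_le[of k] inv_al[of "Suc k"] et0 ap0 L_low(1) unfolding et_def ap_def
        by (intro mult_mono) auto
      finally show ?thesis .
    qed
    have q4: "1 / L_low * sqrt \<kappa> * (e\<^sup>2 / (2 * (1 - c))) \<le> (1 - c * a) * (K * e\<^sup>2)"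
    proof -
      have ca: "1 - c \<le> 1 - c * a" using mult_left_mono[of a 1 c] c a0 by simp
      have "1 / L_low * sqrt \<kappa> * (e\<^sup>2 / (2 * (1 - c))) = (1 - c) * (K * e\<^sup>2)"
      proof -
        obtain d where d: "d = 1 - c" "d > 0" using c1 by auto
        show ?thesis unfolding K_def d(1)[symmetric] using d(2) L_low(1)
          by (simp add: field_simps power2_eq_square)
      qed
      also have "\<dots> \<le> (1 - c * a) * (K * e\<^sup>2)"
        using ca kap_pos L_low(1) c1 unfolding K_def by (intro mult_right_mono) auto
      finally show ?thesis .
    qed
    have q34: "et / ap * (e\<^sup>2 / (2 * (1 - c))) \<le> 1 / L_low * sqrt \<kappa> * (e\<^sup>2 / (2 * (1 - c)))"
      using q3 c1 by (intro mult_right_mono) auto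
    have p3: "a * e * Dp - A / 2 * Dp\<^sup>2 \<le> (1 - c * a) * (K * e\<^sup>2)"
      using q1 q2 q34 q4 by linarith
    have psi_eq: "\<psi>r (Suc k) = Fr (Suc k) + gp / 2 * Dp\<^sup>2 - A / 2 * Dp\<^sup>2"
      unfolding \<psi>r_def A_def gp_def Dp_def ap_def by (simp add: field_simps)
    have psi_k: "(1 - c * a) * (\<psi>r k + K * e\<^sup>2) = (1 - c * a) * Fr k + ((1 - c * a) * (1 - (1 - c) * a)) * (gk / 2 * Dk\<^sup>2) + (1 - c * a) * (K * e\<^sup>2)"
      unfolding \<psi>r_def a_def gk_def Dk_def e_def by (simp add: field_simps)
    have "\<psi>r (Suc k) \<le> (1 - c * a) * (\<psi>r k + K * e\<^sup>2)"
      unfolding psi_eq psi_k using st p1 p2 p3 distrib_left[of "1-a" "Fr k" "gk/2*Dk\<^sup>2"] by linarith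
    then show ?thesis unfolding a_def e_def .
  qed
  define P where "P = (\<lambda>k. \<Prod>j\<le>k. 1 - c * \<alpha> j)"
  have fac_pos: "1 - c * \<alpha> j > 0" for j
  proof -
    have "c * \<alpha> j \<le> c * 1" using c al1[of j] by (intro mult_left_mono) auto
    then show ?thesis using c by simp
  qed
  have Ppos: "(\<Prod>j<t. 1 - c * \<alpha> j) > 0" for t using fac_pos by (simp add: prod_pos)
  have unroll: "\<psi>r (Suc k) \<le> (\<Prod>j\<le>k. 1 - c * \<alpha> j) *
                 (\<psi>r 0 + K * (\<Sum>t\<le>k. (\<epsilon> t)\<^sup>2 / (\<Prod>j<t. 1 - c * \<alpha> j)))" for k
  proof (induction k)
    case 0 then show ?case using psi_step[of 0] by simp
  next
    case (Suc k)
    let ?P = "\<Prod>j\<le>k. 1 - c * \<alpha> j"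
    have Pk: "?P = (\<Prod>j<Suc k. 1 - c * \<alpha> j)" using lessThan_Suc_atMost by simp
    have PkP: "?P > 0" using Ppos[of "Suc k"] Pk by simp
    have "\<psi>r (Suc (Suc k)) \<le> (1 - c * \<alpha> (Suc k)) * (\<psi>r (Suc k) + K * (\<epsilon> (Suc k))\<^sup>2)"
      by (rule psi_step)
    also have "\<dots> \<le> (1 - c * \<alpha> (Suc k)) * (?P * (\<psi>r 0 + K * (\<Sum>t\<le>k. (\<epsilon> t)\<^sup>2 / (\<Prod>j<t. 1 - c * \<alpha> j))) + K * (\<epsilon> (Suc k))\<^sup>2)"
      using Suc fac_pos[of "Suc k"] by (intro mult_left_mono) auto
    also have "\<dots> = (\<Prod>j\<le>Suc k. 1 - c * \<alpha> j) * (\<psi>r 0 + K * (\<Sum>t\<le>Suc k. (\<epsilon> t)\<^sup>2 / (\<Prod>j<t. 1 - c * \<alpha> j)))"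
    proof -
      have e1: "(\<Prod>j\<le>Suc k. 1 - c * \<alpha> j) = (1 - c * \<alpha> (Suc k)) * ?P"
        by (simp add: prod.atMost_Suc mult.commute)
      have e2: "(\<Sum>t\<le>Suc k. (\<epsilon> t)\<^sup>2 / (\<Prod>j<t. 1 - c * \<alpha> j)) = (\<Sum>t\<le>k. (\<epsilon> t)\<^sup>2 / (\<Prod>j<t. 1 - c * \<alpha> j)) + (\<epsilon> (Suc k))\<^sup>2 / ?P"
        unfolding sum.atMost_Suc Pk ..
      have "?P \<noteq> 0" using PkP by linarith
      then show ?thesis unfolding e1 e2 by (rule unroll_alg)
    qed
    finally show ?case .
  qed
  have part1: "\<forall>k. (F (x (Suc k)) - F xs + ereal ((1 - (1 - c) * \<alpha> (Suc k)) * \<gamma> (Suc k) / 2 * (norm (xs - z (Suc k)))\<^sup>2))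
       \<le> ereal (\<Prod>j\<le>k. 1 - c * \<alpha> j) *
                 ((F (x 0) - F xs + ereal ((1 - (1 - c) * \<alpha> 0) * \<gamma> 0 / 2 * (norm (xs - z 0))\<^sup>2))
                  + ereal (sqrt \<kappa> / (2 * (1 - c)\<^sup>2 * L_low) *
                    (\<Sum>t\<le>k. (\<epsilon> t)\<^sup>2 / (\<Prod>j<t. 1 - c * \<alpha> j))))"
  proof
    fix k
    have e: "F (x j) - F xs + ereal ((1 - (1 - c) * \<alpha> j) * \<gamma> j / 2 * (norm (xs - z j))\<^sup>2) = ereal (\<psi>r j)" for j
      unfolding Feq[OF Hfin_s] Feq[OF Hfin_x] \<psi>r_def Fr_def Fs_def D_def by simp
    show "F (x (Suc k)) - F xs + ereal ((1 - (1 - c) * \<alpha> (Suc k)) * \<gamma> (Suc k) / 2 * (norm (xs - z (Suc k)))\<^sup>2)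
       \<le> ereal (\<Prod>j\<le>k. 1 - c * \<alpha> j) *
                 ((F (x 0) - F xs + ereal ((1 - (1 - c) * \<alpha> 0) * \<gamma> 0 / 2 * (norm (xs - z 0))\<^sup>2))
                  + ereal (sqrt \<kappa> / (2 * (1 - c)\<^sup>2 * L_low) *
                    (\<Sum>t\<le>k. (\<epsilon> t)\<^sup>2 / (\<Prod>j<t. 1 - c * \<alpha> j))))"
      unfolding e using unroll[of k] unfolding K_def by simp
  qed
  have part2: "(\<forall>k. \<epsilon> k = 0) \<longrightarrow>
         (\<forall>k. F (x (Suc k)) - F xs + ereal (\<gamma> (Suc k) / 2 * (norm (xs - z (Suc k)))\<^sup>2)
              \<le> ereal ((1 - sqrt (1 / \<kappa>)) ^ (Suc k)) *
                 (F (x 0) - F xs + ereal (\<gamma> 0 / 2 * (norm (xs - z 0))\<^sup>2)))"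
  proof (intro impI allI)
    fix k assume e0: "\<forall>k. \<epsilon> k = 0"
    let ?q = "1 - sqrt (1 / \<kappa>)"
    have q0: "?q \<ge> 0" using kap_ge1 by simp
    have st: "E (Suc j) \<le> ?q * E j" for j
    proof -
      have "E (Suc j) \<le> (1 - \<alpha> j) * E j" using step[of j] e0 by simp
      also have "\<dots> \<le> ?q * E j" using al_lb[of j] E_nn[of j] by (intro mult_right_mono) auto
      finally show ?thesis .
    qed
    have "E (Suc j) \<le> ?q ^ Suc j * E 0" for j
    proof (induction j)
      case 0 then show ?case using st[of 0] by simp
    next
      case (Suc j)
      have "E (Suc (Suc j)) \<le> ?q * E (Suc j)" by (rule st)
      also have "\<dots> \<le> ?q * (?q ^ Suc j * E 0)" using Suc q0 by (intro mult_left_mono) auto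
      finally show ?case by simp
    qed
    moreover have e: "F (x j) - F xs + ereal (\<gamma> j / 2 * (norm (xs - z j))\<^sup>2) = ereal (E j)" for j
      unfolding Feq[OF Hfin_s] Feq[OF Hfin_x] E_def Fr_def Fs_def D_def by simp
    ultimately show "F (x (Suc k)) - F xs + ereal (\<gamma> (Suc k) / 2 * (norm (xs - z (Suc k)))\<^sup>2)
              \<le> ereal ((1 - sqrt (1 / \<kappa>)) ^ (Suc k)) *
                 (F (x 0) - F xs + ereal (\<gamma> 0 / 2 * (norm (xs - z 0))\<^sup>2))"
      unfolding e by simp
  qed
  show ?thesis unfolding Let_def using part1 part2 by blast
qed


end
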